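(* Let $D$ be a digraph of order $n$ and let $k\ge 2$ be an integer with $k\le n$. Then: (1) if $k\le n-1$, then $\lambda_{k+1}(D)\le \lambda_k(D)$; (2) if $D'$ is a spanning subgraph of $D$, then $\lambda_k(D')\le \lambda_k(D)$; (3) $\kappa_k(D)\le \lambda_k(D)\le \min\{\delta^+(D),\delta^-(D)\}$.
   Context: Digraphs are finite, without loops or parallel arcs. For $S\subseteq V(D)$, $\lambda_S(D)$ is the maximum number of pairwise arc-disjoint strong subgraphs of $D$ containing $S$, and $\lambda_k(D)=\min\{\lambda_S(D): S\subseteq V(D), |S|=k\}$ (strong subgraph $k$-arc-connectivity). Strong subgraphs $D_1,\dots,D_p$ containing $S$ are internally disjoint if $V(D_i)\cap V(D_j)=S$ and $A(D_i)\cap A(D_j)=\emptyset$ for all $i\ne j$; $\kappa_S(D)$ is the maximum number of internally disjoint strong subgraphs containing $S$, and $\kappa_k(D)=\min\{\kappa_S(D): S\subseteq V(D),|S|=k\}$. $\delta^+(D)$ and $\delta^-(D)$ denote the minimum out-degree and minimum in-degree of $D$. *)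

theory Defs
  imports Main
begin

text \<open>A (finite) digraph is given by a vertex set V and an arc set A \<subseteq> V \<times> V,
  without loops; parallel arcs are excluded automatically since A is a set.\<close>

definition digraph :: "'a set \<Rightarrow> ('a \<times> 'a) set \<Rightarrow> bool" where
  "digraph V A \<longleftrightarrow> finite V \<and> A \<subseteq> V \<times> V \<and> (\<forall>v. (v, v) \<notin> A)"

definition strong_subgraph_containing ::
  "'a set \<Rightarrow> ('a \<times> 'a) set \<Rightarrow> 'a set \<Rightarrow> 'a set \<times> ('a \<times> 'a) set \<Rightarrow> bool" where
  "strong_subgraph_containing V A S H \<longleftrightarrow>
     fst H \<subseteq> V \<and> snd H \<subseteq> A \<and> snd H \<subseteq> fst H \<times> fst H \<and> fst H \<noteq> {} \<and> S \<subseteq> fst H \<and>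
     (\<forall>u\<in>fst H. \<forall>v\<in>fst H. (u, v) \<in> (snd H)\<^sup>*)"

definition lambda_S :: "'a set \<Rightarrow> ('a \<times> 'a) set \<Rightarrow> 'a set \<Rightarrow> nat" where
  "lambda_S V A S = Max {p. \<exists>H :: nat \<Rightarrow> 'a set \<times> ('a \<times> 'a) set.
      (\<forall>i<p. strong_subgraph_containing V A S (H i)) \<and>
      (\<forall>i<p. \<forall>j<p. i \<noteq> j \<longrightarrow> snd (H i) \<inter> snd (H j) = {})}"

definition kappa_S :: "'a set \<Rightarrow> ('a \<times> 'a) set \<Rightarrow> 'a set \<Rightarrow> nat" where
  "kappa_S V A S = Max {p. \<exists>H :: nat \<Rightarrow> 'a set \<times> ('a \<times> 'a) set.
      (\<forall>i<p. strong_subgraph_containing V A S (H i)) \<and>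
      (\<forall>i<p. \<forall>j<p. i \<noteq> j \<longrightarrow> fst (H i) \<inter> fst (H j) = S \<and> snd (H i) \<inter> snd (H j) = {})}"

definition lambda_k :: "'a set \<Rightarrow> ('a \<times> 'a) set \<Rightarrow> nat \<Rightarrow> nat" where
  "lambda_k V A k = Min ((\<lambda>S. lambda_S V A S) ` {S. S \<subseteq> V \<and> card S = k})"

definition kappa_k :: "'a set \<Rightarrow> ('a \<times> 'a) set \<Rightarrow> nat \<Rightarrow> nat" where
  "kappa_k V A k = Min ((\<lambda>S. kappa_S V A S) ` {S. S \<subseteq> V \<and> card S = k})"

definition min_out_degree :: "'a set \<Rightarrow> ('a \<times> 'a) set \<Rightarrow> nat" where
  "min_out_degree V A = Min ((\<lambda>v. card {w. (v, w) \<in> A}) ` V)"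

definition min_in_degree :: "'a set \<Rightarrow> ('a \<times> 'a) set \<Rightarrow> nat" where
  "min_in_degree V A = Min ((\<lambda>v. card {u. (u, v) \<in> A}) ` V)"

end

theory Submission
  imports Defs
begin

lemma arc_out_in:
  assumes "strong_subgraph_containing V A S H" "u \<in> S" "v \<in> S" "u \<noteq> v"
  shows "\<exists>w. (u,w) \<in> snd H" "\<exists>w. (w,u) \<in> snd H"
proof -
  have "(u,v) \<in> (snd H)\<^sup>*" "(v,u) \<in> (snd H)\<^sup>*" using assms unfolding strong_subgraph_containing_def by blast+
  then show "\<exists>w. (u,w) \<in> snd H" "\<exists>w. (w,u) \<in> snd H" using assms(4)
    by (auto elim: converse_rtranclE rtranclE)
qed

lemma out_bound:
  assumes "\<forall>i<p. \<exists>w. (u,w) \<in> B i" "\<forall>i<p. \<forall>j<p. i\<noteq>j \<longrightarrow> B i \<inter> B j = {}"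
    "\<forall>i<p. B i \<subseteq> A" "finite A"
  shows "p \<le> card {w. (u,w) \<in> A}"
proof -
  define f where "f i = (SOME w. (u,w) \<in> B i)" for i
  have f: "(u, f i) \<in> B i" if "i < p" for i
    using assms(1) that unfolding f_def by (meson someI_ex)
  have inj: "inj_on f {..<p}"
  proof (rule inj_onI)
    fix i j assume "i \<in> {..<p}" "j \<in> {..<p}" "f i = f j"
    then show "i = j" using f[of i] f[of j] assms(2) by auto
  qed
  have sub: "f ` {..<p} \<subseteq> {w. (u,w) \<in> A}" using f assms(3) by auto
  have fin: "finite {w. (u,w) \<in> A}"
    by (rule finite_subset[of _ "snd ` A"]) (force, simp add: assms(4))
  have "card {..<p} \<le> card {w. (u,w) \<in> A}"
    using card_inj_on_le[OF inj sub fin] .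
  then show ?thesis by simp
qed

lemma in_bound:
  assumes "\<forall>i<p. \<exists>w. (w,u) \<in> B i" "\<forall>i<p. \<forall>j<p. i\<noteq>j \<longrightarrow> B i \<inter> B j = {}"
    "\<forall>i<p. B i \<subseteq> A" "finite A"
  shows "p \<le> card {w. (w,u) \<in> A}"
proof -
  define f where "f i = (SOME w. (w,u) \<in> B i)" for i
  have f: "(f i, u) \<in> B i" if "i < p" for i
    using assms(1) that unfolding f_def by (meson someI_ex)
  have inj: "inj_on f {..<p}"
  proof (rule inj_onI)
    fix i j assume "i \<in> {..<p}" "j \<in> {..<p}" "f i = f j"
    then show "i = j" using f[of i] f[of j] assms(2) by auto
  qed
  have sub: "f ` {..<p} \<subseteq> {w. (w,u) \<in> A}" using f assms(3) by auto
  have fin: "finite {w. (w,u) \<in> A}"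
    by (rule finite_subset[of _ "fst ` A"]) (force, simp add: assms(4))
  have "card {..<p} \<le> card {w. (w,u) \<in> A}"
    using card_inj_on_le[OF inj sub fin] .
  then show ?thesis by simp
qed

definition LS :: "'a set \<Rightarrow> ('a \<times> 'a) set \<Rightarrow> 'a set \<Rightarrow> nat set" where
  "LS V A S = {p. \<exists>H :: nat \<Rightarrow> 'a set \<times> ('a \<times> 'a) set.
      (\<forall>i<p. strong_subgraph_containing V A S (H i)) \<and>
      (\<forall>i<p. \<forall>j<p. i \<noteq> j \<longrightarrow> snd (H i) \<inter> snd (H j) = {})}"

definition KS :: "'a set \<Rightarrow> ('a \<times> 'a) set \<Rightarrow> 'a set \<Rightarrow> nat set" where
  "KS V A S = {p. \<exists>H :: nat \<Rightarrow> 'a set \<times> ('a \<times> 'a) set.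
      (\<forall>i<p. strong_subgraph_containing V A S (H i)) \<and>
      (\<forall>i<p. \<forall>j<p. i \<noteq> j \<longrightarrow> fst (H i) \<inter> fst (H j) = S \<and> snd (H i) \<inter> snd (H j) = {})}"

lemma lambda_S_LS: "lambda_S V A S = Max (LS V A S)"
  unfolding lambda_S_def LS_def by simp

lemma kappa_S_KS: "kappa_S V A S = Max (KS V A S)"
  unfolding kappa_S_def KS_def by simp

lemma LS_bound:
  assumes "finite A" "u \<in> S" "v \<in> S" "u \<noteq> v" "p \<in> LS V A S"
  shows "p \<le> card {w. (u,w) \<in> A}" "p \<le> card {w. (w,u) \<in> A}"
proof -
  obtain H where H: "\<forall>i<p. strong_subgraph_containing V A S (H i)"
    "\<forall>i<p. \<forall>j<p. i \<noteq> j \<longrightarrow> snd (H i) \<inter> snd (H j) = {}"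
    using assms(5) unfolding LS_def by auto
  have sub: "\<forall>i<p. snd (H i) \<subseteq> A" using H(1) unfolding strong_subgraph_containing_def by auto
  show "p \<le> card {w. (u,w) \<in> A}"
  proof (rule out_bound[of p u "\<lambda>i. snd (H i)" A])
    show "\<forall>i<p. \<exists>w. (u, w) \<in> snd (H i)" using H(1) arc_out_in(1)[OF _ assms(2-4)] by blast
  qed (use H(2) sub assms(1) in simp_all)
  show "p \<le> card {w. (w,u) \<in> A}"
  proof (rule in_bound[of p u "\<lambda>i. snd (H i)" A])
    show "\<forall>i<p. \<exists>w. (w, u) \<in> snd (H i)" using H(1) arc_out_in(2)[OF _ assms(2-4)] by blast
  qed (use H(2) sub assms(1) in simp_all)
qed

lemma LS_0: "0 \<in> LS V A S" unfolding LS_def by auto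
lemma KS_0: "0 \<in> KS V A S" unfolding KS_def by auto

lemma LS_finite:
  assumes "finite A" "u \<in> S" "v \<in> S" "u \<noteq> v"
  shows "finite (LS V A S)"
proof (rule finite_subset[of _ "{..card {w. (u,w) \<in> A}}"])
  show "LS V A S \<subseteq> {..card {w. (u,w) \<in> A}}"
  proof
    fix p assume "p \<in> LS V A S"
    then show "p \<in> {..card {w. (u,w) \<in> A}}" using LS_bound(1)[OF assms] by simp
  qed
qed simp

lemma KS_sub: "KS V A S \<subseteq> LS V A S"
proof
  fix p assume "p \<in> KS V A S"
  then obtain H where H: "\<forall>i<p. strong_subgraph_containing V A S (H i)"
    "\<forall>i<p. \<forall>j<p. i \<noteq> j \<longrightarrow> fst (H i) \<inter> fst (H j) = S \<and> snd (H i) \<inter> snd (H j) = {}"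
    unfolding KS_def by blast
  have "\<forall>i<p. \<forall>j<p. i \<noteq> j \<longrightarrow> snd (H i) \<inter> snd (H j) = {}" using H(2) by blast
  then show "p \<in> LS V A S" using H(1) unfolding LS_def by blast
qed

lemma LS_mono_A: "A' \<subseteq> A \<Longrightarrow> LS V A' S \<subseteq> LS V A S"
proof
  fix p assume A: "A' \<subseteq> A" and "p \<in> LS V A' S"
  then obtain H where H: "\<forall>i<p. strong_subgraph_containing V A' S (H i)"
    "\<forall>i<p. \<forall>j<p. i \<noteq> j \<longrightarrow> snd (H i) \<inter> snd (H j) = {}"
    unfolding LS_def by blast
  have "\<forall>i<p. strong_subgraph_containing V A S (H i)"
    using H(1) A unfolding strong_subgraph_containing_def by (meson order_trans)
  then show "p \<in> LS V A S" using H(2) unfolding LS_def by blast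
qed

lemma LS_mono_S: "S \<subseteq> S' \<Longrightarrow> LS V A S' \<subseteq> LS V A S"
proof
  fix p assume A: "S \<subseteq> S'" and "p \<in> LS V A S'"
  then obtain H where H: "\<forall>i<p. strong_subgraph_containing V A S' (H i)"
    "\<forall>i<p. \<forall>j<p. i \<noteq> j \<longrightarrow> snd (H i) \<inter> snd (H j) = {}"
    unfolding LS_def by blast
  have "\<forall>i<p. strong_subgraph_containing V A S (H i)"
    using H(1) A unfolding strong_subgraph_containing_def by (meson order_trans)
  then show "p \<in> LS V A S" using H(2) unfolding LS_def by blast
qed

lemma two_elems:
  assumes "2 \<le> card S" shows "\<exists>u v. u \<in> S \<and> v \<in> S \<and> u \<noteq> v"
proof -
  have "finite S" using assms card.infinite by fastforce
  then show ?thesis using assms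
    by (metis One_nat_def card_le_Suc0_iff_eq not_less_eq_eq numeral_2_eq_2)
qed

lemma two_elems2:
  assumes "2 \<le> card S" "u \<in> S" shows "\<exists>v. v \<in> S \<and> u \<noteq> v"
proof -
  obtain a b where "a \<in> S" "b \<in> S" "a \<noteq> b" using two_elems[OF assms(1)] by blast
  then show ?thesis by blast
qed

lemma Max_le_mono:
  assumes "finite B" "X \<subseteq> B" "0 \<in> X" shows "Max X \<le> Max (B :: nat set)"
  using assms by (intro Max_mono) auto

lemma Min_le_Min:
  assumes "finite K" "K \<noteq> {}" "\<forall>S\<in>K. f S \<le> (g S :: nat)"
  shows "Min (f ` K) \<le> Min (g ` K)"
proof -
  have "Min (g ` K) \<in> g ` K" using Min_in[of "g ` K"] assms by auto
  then obtain S where S: "S \<in> K" "Min (g ` K) = g S" by auto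
  have "Min (f ` K) \<le> f S" using assms S by auto
  moreover have "f S \<le> g S" using assms(3) S(1) by blast
  ultimately show ?thesis using S(2) by linarith
qed

theorem proposition3p1:
  fixes V :: "'a set" and A :: "('a \<times> 'a) set" and n k :: nat
  assumes "digraph V A" and "card V = n" and "2 \<le> k" and "k \<le> n"
  shows "(k \<le> n - 1 \<longrightarrow> lambda_k V A (k + 1) \<le> lambda_k V A k)
       \<and> (\<forall>A'. A' \<subseteq> A \<longrightarrow> lambda_k V A' k \<le> lambda_k V A k)
       \<and> kappa_k V A k \<le> lambda_k V A k
       \<and> lambda_k V A k \<le> min (min_out_degree V A) (min_in_degree V A)"
proof -
  have finV: "finite V" and AV: "A \<subseteq> V \<times> V" using assms(1) unfolding digraph_def by auto
  have finA: "finite A" using finV AV finite_subset by blast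
  define K where "K j = {S. S \<subseteq> V \<and> card S = j}" for j
  have finK: "finite (K j)" for j unfolding K_def using finV by (simp add: finite_subset)
  have neK: "K j \<noteq> {}" if "j \<le> n" for j
  proof -
    have "j \<le> card V" using that assms(2) by simp
    then obtain T where "T \<subseteq> V" "card T = j" using obtain_subset_with_card_n by metis
    then show ?thesis unfolding K_def by auto
  qed
  have lk: "lambda_k V B j = Min ((\<lambda>S. lambda_S V B S) ` K j)" for B j
    unfolding lambda_k_def K_def by simp
  have kk: "kappa_k V A j = Min ((\<lambda>S. kappa_S V A S) ` K j)" for j
    unfolding kappa_k_def K_def by simp
  have finLS: "finite (LS V A S)" if "S \<in> K j" "2 \<le> j" for S j
  proof -
    have "2 \<le> card S" using that unfolding K_def by simp
    then obtain u v where "u \<in> S" "v \<in> S" "u \<noteq> v" using two_elems by blast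
    then show ?thesis by (rule LS_finite[OF finA])
  qed
  have neKk: "K k \<noteq> {}" using neK assms(4) by simp
  have P1: "k \<le> n - 1 \<longrightarrow> lambda_k V A (k + 1) \<le> lambda_k V A k"
  proof
    assume kn: "k \<le> n - 1"
    have "Min ((\<lambda>S. lambda_S V A S) ` K k) \<in> (\<lambda>S. lambda_S V A S) ` K k"
      using finK neKk by (intro Min_in) simp_all
    then obtain S0 where S0: "S0 \<in> K k" "lambda_k V A k = lambda_S V A S0"
      unfolding lk by auto
    have S0V: "S0 \<subseteq> V" and cS0: "card S0 = k" using S0(1) unfolding K_def by simp_all
    have "card S0 < card V" using cS0 kn assms by linarith
    have "V - S0 \<noteq> {}"
    proof
      assume "V - S0 = {}"
      then have "V \<subseteq> S0" by blast
      then have "card V \<le> card S0" using finV S0V by (meson card_mono finite_subset)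
      then show False using \<open>card S0 < card V\<close> by linarith
    qed
    then obtain x where x: "x \<in> V" "x \<notin> S0" by blast
    have finS0: "finite S0" using S0V finV by (rule finite_subset)
    have S1: "insert x S0 \<in> K (k+1)" using S0V cS0 x finS0 unfolding K_def by simp
    have "lambda_k V A (k+1) \<le> lambda_S V A (insert x S0)"
      unfolding lk using S1 finK by simp
    also have "\<dots> \<le> lambda_S V A S0"
      unfolding lambda_S_LS
      by (rule Max_le_mono[OF finLS[OF S0(1) assms(3)] LS_mono_S LS_0]) blast
    finally show "lambda_k V A (k + 1) \<le> lambda_k V A k" using S0 by simp
  qed
  have P2: "\<forall>A'. A' \<subseteq> A \<longrightarrow> lambda_k V A' k \<le> lambda_k V A k"
  proof (intro allI impI)
    fix A' assume A': "A' \<subseteq> A"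
    have "\<forall>S\<in>K k. lambda_S V A' S \<le> lambda_S V A S"
    proof
      fix S assume "S \<in> K k"
      show "lambda_S V A' S \<le> lambda_S V A S"
        unfolding lambda_S_LS
        by (rule Max_le_mono[OF finLS[OF \<open>S \<in> K k\<close> assms(3)] LS_mono_A[OF A'] LS_0])
    qed
    then show "lambda_k V A' k \<le> lambda_k V A k"
      unfolding lk by (rule Min_le_Min[OF finK neKk])
  qed
  have P3: "kappa_k V A k \<le> lambda_k V A k"
  proof -
    have "\<forall>S\<in>K k. kappa_S V A S \<le> lambda_S V A S"
    proof
      fix S assume "S \<in> K k"
      show "kappa_S V A S \<le> lambda_S V A S"
        unfolding lambda_S_LS kappa_S_KS
        by (rule Max_le_mono[OF finLS[OF \<open>S \<in> K k\<close> assms(3)] KS_sub KS_0])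
    qed
    then show ?thesis
      unfolding lk kk by (rule Min_le_Min[OF finK neKk])
  qed
  have Vne: "V \<noteq> {}" using neKk unfolding K_def using assms(3) by auto
  have exS: "\<exists>S\<in>K k. v \<in> S" if "v \<in> V" for v
  proof -
    have "card (V - {v}) = n - 1" using that finV assms(2) by simp
    then have "k - 1 \<le> card (V - {v})" using assms by simp
    then obtain T where T: "T \<subseteq> V - {v}" "card T = k - 1"
      using obtain_subset_with_card_n by metis
    have "finite T" using T finV by (meson finite_Diff finite_subset)
    moreover have "v \<notin> T" using T by blast
    ultimately have "card (insert v T) = k" using T assms(3) by simp
    moreover have "insert v T \<subseteq> V" using T that by blast
    ultimately have "insert v T \<in> K k" unfolding K_def by simp
    then show ?thesis by blast
  qed
  have lamS: "lambda_k V A k \<le> lambda_S V A S" if "S \<in> K k" for S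
    unfolding lk using that finK by simp
  have Sbound: "lambda_S V A S \<le> c" if "S \<in> K k" "\<And>p. p \<in> LS V A S \<Longrightarrow> p \<le> c" for S c
  proof -
    have "Max (LS V A S) \<in> LS V A S" using finLS[OF that(1) assms(3)] LS_0 by (intro Max_in) auto
    then show ?thesis unfolding lambda_S_LS using that(2) by blast
  qed
  have P4: "lambda_k V A k \<le> min_out_degree V A"
  proof -
    have "Min ((\<lambda>v. card {w. (v, w) \<in> A}) ` V) \<in> (\<lambda>v. card {w. (v, w) \<in> A}) ` V"
      using finV Vne by (intro Min_in) simp_all
    then obtain v where v: "v \<in> V" "min_out_degree V A = card {w. (v, w) \<in> A}"
      unfolding min_out_degree_def by auto
    obtain S where S: "S \<in> K k" "v \<in> S" using exS v by blast
    have c2: "2 \<le> card S" using S assms(3) unfolding K_def by simp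
    obtain u where u: "u \<in> S" "v \<noteq> u" using two_elems2[OF c2 S(2)] by blast
    have "lambda_S V A S \<le> card {w. (v, w) \<in> A}"
      by (rule Sbound[OF S(1)], rule LS_bound(1)[OF finA S(2) u]) 
    then show ?thesis using lamS[OF S(1)] v by simp
  qed
  have P5: "lambda_k V A k \<le> min_in_degree V A"
  proof -
    have "Min ((\<lambda>v. card {w. (w, v) \<in> A}) ` V) \<in> (\<lambda>v. card {w. (w, v) \<in> A}) ` V"
      using finV Vne by (intro Min_in) simp_all
    then obtain v where v: "v \<in> V" "min_in_degree V A = card {w. (w, v) \<in> A}"
      unfolding min_in_degree_def by auto
    obtain S where S: "S \<in> K k" "v \<in> S" using exS v by blast
    have c2: "2 \<le> card S" using S assms(3) unfolding K_def by simp
    obtain u where u: "u \<in> S" "v \<noteq> u" using two_elems2[OF c2 S(2)] by blast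
    have "lambda_S V A S \<le> card {w. (w, v) \<in> A}"
      by (rule Sbound[OF S(1)], rule LS_bound(2)[OF finA S(2) u]) 
    then show ?thesis using lamS[OF S(1)] v by simp
  qed
  show ?thesis using P1 P2 P3 P4 P5 by simp
qed

end
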